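(* Let $(S,\mathcal{S})$ be a measurable space with $\Delta\in\mathcal{S}\otimes\mathcal{S}$ and let $\pi$ be a constructive cr-set. Then there exists $F\in\mathcal{S}$ such that (i) $\pi\cap F$ possesses a version that is $\sigma$-finite on $\mathcal{S}$, and (ii) for all $A\in\mathcal{S}$, either $P((\pi\cap F^{c})\cap A\neq \emptyset)=0$ or $P(|(\pi\cap F^{c})\cap A|=\infty)>0$. Moreover, if two sets $F_{1},F_{2}\in\mathcal{S}$ both satisfy (i) and (ii), then $P(\pi\cap (F_{1}\triangle F_{2})\neq \emptyset)=0$.
   Context: $\Delta=\{(x,x)\mid x\in S\}$. $(\Omega,\mathcal{F},P)$ is a probability space; $C(S)$ is the set of countable subsets of $S$; $N_A(M)=|A\cap M|$; $\mathcal{C}(\mathcal{S})=\sigma(N_A\mid A\in\mathcal{S})$; a cr-set is an $\mathcal{F}$-$\mathcal{C}(\mathcal{S})$ measurable map $\Omega\to C(S)$, finite if its values are finite sets. A map $\tau:\Omega\to C(S)$ is constructive if $\tau(\omega)=\bigcup_k\pi_k(\omega)$ for all $\omega$ for some finite cr-sets $\pi_k$, $k\in\mathbb{N}$. For $A\in\mathcal{S}$, $\pi\cap A$ denotes the cr-set $\omega\mapsto\pi(\omega)\cap A$. A version of a cr-set $\pi$ is a cr-set $\pi'$ with $\pi'(\omega)=\pi(\omega)$ for all $\omega$ outside a $P$-null set in $\mathcal{F}$. A map $\tau$ is $\sigma$-finite on $\mathcal{S}$ if there are $A_n\in\mathcal{S}$ with $S=\bigcup_nA_n$ and $|\tau(\omega)\cap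 A_n|<\infty$ for all $\omega$ and $n$. *)

theory Defs
  imports "HOL-Probability.Probability"
begin

definition countable_subsets :: "'a measure \<Rightarrow> 'a set set" where
  "countable_subsets M = {X. X \<subseteq> space M \<and> countable X}"

definition Ncount :: "'a set \<Rightarrow> 'a set \<Rightarrow> enat" where
  "Ncount A X = (if finite (A \<inter> X) then enat (card (A \<inter> X)) else \<infinity>)"

text \<open>The measurable space (C(S), \<C>(\<S>)), where \<C>(\<S>) is the smallest sigma-algebra
  on C(S) making every N_A (A in \<S>) measurable into the discrete space of extended
  naturals; since that codomain is countable, it is generated by the sets
  {X. N_A X = k}.\<close>
definition cr_space :: "'a measure \<Rightarrow> 'a set measure" where
  "cr_space M = sigma (countable_subsets M)
     {{X \<in> countable_subsets M. Ncount A X = k} | A k. A \<in> sets M}"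

definition cr_set :: "'b measure \<Rightarrow> 'a measure \<Rightarrow> ('b \<Rightarrow> 'a set) \<Rightarrow> bool" where
  "cr_set P M \<pi> \<longleftrightarrow> \<pi> \<in> measurable P (cr_space M)"

definition finite_cr_set :: "'b measure \<Rightarrow> 'a measure \<Rightarrow> ('b \<Rightarrow> 'a set) \<Rightarrow> bool" where
  "finite_cr_set P M \<pi> \<longleftrightarrow> cr_set P M \<pi> \<and> (\<forall>\<omega>\<in>space P. finite (\<pi> \<omega>))"

definition constructive :: "'b measure \<Rightarrow> 'a measure \<Rightarrow> ('b \<Rightarrow> 'a set) \<Rightarrow> bool" where
  "constructive P M \<tau> \<longleftrightarrow> (\<exists>\<pi>s :: nat \<Rightarrow> 'b \<Rightarrow> 'a set.
      (\<forall>k. finite_cr_set P M (\<pi>s k)) \<and> (\<forall>\<omega>\<in>space P. \<tau> \<omega> = (\<Union>k. \<pi>s k \<omega>)))"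

definition is_version :: "'b measure \<Rightarrow> 'a measure \<Rightarrow> ('b \<Rightarrow> 'a set) \<Rightarrow> ('b \<Rightarrow> 'a set) \<Rightarrow> bool" where
  "is_version P M \<pi> \<pi>' \<longleftrightarrow> cr_set P M \<pi>' \<and>
     (\<exists>N\<in>null_sets P. \<forall>\<omega>\<in>space P - N. \<pi>' \<omega> = \<pi> \<omega>)"

definition sigma_finite_on :: "'b measure \<Rightarrow> 'a measure \<Rightarrow> ('b \<Rightarrow> 'a set) \<Rightarrow> bool" where
  "sigma_finite_on P M \<tau> \<longleftrightarrow> (\<exists>A :: nat \<Rightarrow> 'a set. (\<forall>n. A n \<in> sets M) \<and>
      (\<Union>n. A n) = space M \<and> (\<forall>\<omega>\<in>space P. \<forall>n. finite (\<tau> \<omega> \<inter> A n)))"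

definition good_set :: "'b measure \<Rightarrow> 'a measure \<Rightarrow> ('b \<Rightarrow> 'a set) \<Rightarrow> 'a set \<Rightarrow> bool" where
  "good_set P M \<pi> F \<longleftrightarrow>
     (\<exists>\<pi>'. is_version P M (\<lambda>\<omega>. \<pi> \<omega> \<inter> F) \<pi>' \<and> sigma_finite_on P M \<pi>') \<and>
     (\<forall>A\<in>sets M.
        measure P {\<omega>\<in>space P. (\<pi> \<omega> \<inter> (space M - F)) \<inter> A \<noteq> {}} = 0 \<or>
        measure P {\<omega>\<in>space P. infinite ((\<pi> \<omega> \<inter> (space M - F)) \<inter> A)} > 0)"

end

theory Submission
  imports Defs
begin

lemma gen_subset: "{{X \<in> countable_subsets M. Ncount A X = k} | A k. A \<in> sets M} \<subseteq> Pow (countable_subsets M)"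
  by auto

lemma cr_space_space: "space (cr_space M) = countable_subsets M"
  unfolding cr_space_def by (rule space_measure_of[OF gen_subset])

lemma cr_space_sets: "sets (cr_space M) = sigma_sets (countable_subsets M)
   {{X \<in> countable_subsets M. Ncount A X = k} | A k. A \<in> sets M}"
  unfolding cr_space_def by (rule sets_measure_of[OF gen_subset])

lemma cr_in:
  assumes "cr_set P M \<sigma>" "\<omega> \<in> space P"
  shows "\<sigma> \<omega> \<subseteq> space M" "countable (\<sigma> \<omega>)"
proof -
  have "\<sigma> \<omega> \<in> space (cr_space M)"
    using assms unfolding cr_set_def by (meson measurable_space)
  then show "\<sigma> \<omega> \<subseteq> space M" "countable (\<sigma> \<omega>)"
    by (auto simp: cr_space_space countable_subsets_def)
qed

lemma gen_sets: "A \<in> sets M \<Longrightarrow> {X \<in> countable_subsets M. Ncount A X = k} \<in> sets (cr_space M)"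
  unfolding cr_space_sets by (rule sigma_sets.Basic) blast

lemma L1:
  assumes "cr_set P M \<sigma>" "A \<in> sets M"
  shows "(\<lambda>\<omega>. Ncount A (\<sigma> \<omega>)) \<in> measurable P (count_space UNIV)"
  unfolding measurable_count_space_eq2_countable
proof (intro conjI ballI)
  fix k
  have "(\<lambda>\<omega>. Ncount A (\<sigma> \<omega>)) -` {k} \<inter> space P
     = \<sigma> -` {X \<in> countable_subsets M. Ncount A X = k} \<inter> space P"
    using cr_in[OF assms(1)] by (auto simp: countable_subsets_def)
  also have "\<dots> \<in> sets P"
    using assms gen_sets unfolding cr_set_def by (metis measurable_sets)
  finally show "(\<lambda>\<omega>. Ncount A (\<sigma> \<omega>)) -` {k} \<inter> space P \<in> sets P" .
qed auto

lemma L2: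
  assumes "cr_set P M \<sigma>" "A \<in> sets M" "B \<in> sets M"
  shows "(\<lambda>\<omega>. (Ncount A (\<sigma> \<omega>), Ncount B (\<sigma> \<omega>))) \<in> measurable P (count_space UNIV)"
  unfolding measurable_count_space_eq2_countable
proof (intro conjI ballI)
  fix k :: "enat \<times> enat"
  have "(\<lambda>\<omega>. (Ncount A (\<sigma> \<omega>), Ncount B (\<sigma> \<omega>))) -` {k} \<inter> space P
     = ((\<lambda>\<omega>. Ncount A (\<sigma> \<omega>)) -` {fst k} \<inter> space P) \<inter> ((\<lambda>\<omega>. Ncount B (\<sigma> \<omega>)) -` {snd k} \<inter> space P)"
    by (cases k) auto
  also have "\<dots> \<in> sets P"
    using L1[OF assms(1,2)] L1[OF assms(1,3)] by (intro sets.Int measurable_sets) auto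
  finally show "(\<lambda>\<omega>. (Ncount A (\<sigma> \<omega>), Ncount B (\<sigma> \<omega>))) -` {k} \<inter> space P \<in> sets P" .
qed auto

lemma Lset:
  assumes "cr_set P M \<sigma>" "A \<in> sets M"
  shows "{\<omega>\<in>space P. Q (Ncount A (\<sigma> \<omega>))} \<in> sets P"
proof -
  have "(\<lambda>\<omega>. Ncount A (\<sigma> \<omega>)) -` {x. Q x} \<inter> space P \<in> sets P"
    using L1[OF assms] by (rule measurable_sets) auto
  moreover have "(\<lambda>\<omega>. Ncount A (\<sigma> \<omega>)) -` {x. Q x} \<inter> space P = {\<omega>\<in>space P. Q (Ncount A (\<sigma> \<omega>))}"
    by auto
  ultimately show ?thesis by simp
qed

lemma Ncount_fin: "finite X \<Longrightarrow> Ncount A X = enat (card (A \<inter> X))"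
  by (simp add: Ncount_def)

lemma Ncount_zero: "Ncount A X = 0 \<longleftrightarrow> X \<inter> A = {}"
  by (auto simp: Ncount_def zero_enat_def Int_commute)

lemma Ncount_inf: "Ncount A X = \<infinity> \<longleftrightarrow> infinite (X \<inter> A)"
  by (auto simp: Ncount_def Int_commute)

lemma meas_nonempty:
  assumes "cr_set P M \<sigma>" "A \<in> sets M"
  shows "{\<omega>\<in>space P. \<sigma> \<omega> \<inter> A \<noteq> {}} \<in> sets P"
  using Lset[OF assms, of "\<lambda>n. n \<noteq> 0"] by (simp add: Ncount_zero)

lemma meas_infinite:
  assumes "cr_set P M \<sigma>" "A \<in> sets M"
  shows "{\<omega>\<in>space P. infinite (\<sigma> \<omega> \<inter> A)} \<in> sets P"
  using Lset[OF assms, of "\<lambda>n. n = \<infinity>"] by (simp add: Ncount_inf)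

lemma cr_inter:
  assumes "cr_set P M \<sigma>" "G \<in> sets M"
  shows "cr_set P M (\<lambda>\<omega>. \<sigma> \<omega> \<inter> G)"
  unfolding cr_set_def
proof (rule measurable_sigma_sets[OF cr_space_sets gen_subset])
  show "(\<lambda>\<omega>. \<sigma> \<omega> \<inter> G) \<in> space P \<rightarrow> countable_subsets M"
    using cr_in[OF assms(1)] by (auto simp: countable_subsets_def intro: countable_subset)
  fix y assume "y \<in> {{X \<in> countable_subsets M. Ncount A X = k} | A k. A \<in> sets M}"
  then obtain A k where y: "y = {X \<in> countable_subsets M. Ncount A X = k}" "A \<in> sets M" by blast
  have "(\<lambda>\<omega>. \<sigma> \<omega> \<inter> G) -` y \<inter> space P = {\<omega>\<in>space P. Ncount (A \<inter> G) (\<sigma> \<omega>) = k}"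
  proof -
    have "Ncount A (X \<inter> G) = Ncount (A \<inter> G) X" for X
      by (simp add: Ncount_def Int_assoc Int_commute Int_left_commute)
    then show ?thesis
      using cr_in[OF assms(1)] by (auto simp: y countable_subsets_def intro: countable_subset)
  qed
  also have "\<dots> \<in> sets P" using assms y by (intro Lset) auto
  finally show "(\<lambda>\<omega>. \<sigma> \<omega> \<inter> G) -` y \<inter> space P \<in> sets P" .
qed

lemma cr_If:
  assumes "cr_set P M \<sigma>" "N \<in> sets P"
  shows "cr_set P M (\<lambda>\<omega>. if \<omega> \<in> N then {} else \<sigma> \<omega>)"
  unfolding cr_set_def
proof (rule measurable_If_set)
  show "(\<lambda>\<omega>. {}) \<in> measurable P (cr_space M)"
    by (rule measurable_const) (auto simp: cr_space_space countable_subsets_def)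
  show "\<sigma> \<in> measurable P (cr_space M)" using assms cr_set_def by blast
  show "N \<inter> space P \<in> sets P" using assms by auto
qed

lemma null_of_measure0:
  assumes "prob_space P" "A \<in> sets P" "measure P A = 0"
  shows "A \<in> null_sets P"
  using assms by (simp add: finite_measure.emeasure_eq_measure prob_space.axioms(1) null_setsI)

lemma null_measure0: "A \<in> null_sets P \<Longrightarrow> measure P A = 0"
  unfolding measure_def by (simp add: null_setsD1)

lemma uniq_half:
  assumes P: "prob_space P" and cr: "cr_set P M \<pi>"
    and F: "F1 \<in> sets M" "F2 \<in> sets M" and g1: "good_set P M \<pi> F1" and g2: "good_set P M \<pi> F2"
  shows "{\<omega>\<in>space P. \<pi> \<omega> \<inter> (F1 - F2) \<noteq> {}} \<in> null_sets P"
proof -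
  from g1 have "\<exists>\<pi>'. is_version P M (\<lambda>\<omega>. \<pi> \<omega> \<inter> F1) \<pi>' \<and> sigma_finite_on P M \<pi>'"
    unfolding good_set_def by (rule conjunct1)
  then obtain \<pi>' where v: "is_version P M (\<lambda>\<omega>. \<pi> \<omega> \<inter> F1) \<pi>'" and sf: "sigma_finite_on P M \<pi>'"
    by (elim exE conjE)
  from v have "\<exists>N\<in>null_sets P. \<forall>\<omega>\<in>space P - N. \<pi>' \<omega> = \<pi> \<omega> \<inter> F1"
    unfolding is_version_def by (rule conjunct2)
  then obtain N where N: "N \<in> null_sets P" and eqv: "\<forall>\<omega>\<in>space P - N. \<pi>' \<omega> = \<pi> \<omega> \<inter> F1"
    by (elim bexE)
  from sf[unfolded sigma_finite_on_def]
  obtain A where A0: "(\<forall>n::nat. A n \<in> sets M) \<and> (\<Union>n. A n) = space M \<and> (\<forall>\<omega>\<in>space P. \<forall>n. finite (\<pi>' \<omega> \<inter> A n))"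
    by (rule exE)
  have A: "\<forall>n::nat. A n \<in> sets M" "(\<Union>n. A n) = space M" "\<forall>\<omega>\<in>space P. \<forall>n. finite (\<pi>' \<omega> \<inter> A n)"
    using A0 by (rule conjunct1, rule conjunct1[OF conjunct2], rule conjunct2[OF conjunct2])
  have null_n: "{\<omega>\<in>space P. \<pi> \<omega> \<inter> ((space M - F2) \<inter> (F1 \<inter> A n)) \<noteq> {}} \<in> null_sets P" for n
  proof -
    have D: "(space M - F2) \<inter> (F1 \<inter> A n) \<in> sets M" using F A by auto
    have sub: "{\<omega>\<in>space P. infinite (\<pi> \<omega> \<inter> ((space M - F2) \<inter> (F1 \<inter> A n)))} \<subseteq> N"
    proof
      fix \<omega> assume w: "\<omega> \<in> {\<omega>\<in>space P. infinite (\<pi> \<omega> \<inter> ((space M - F2) \<inter> (F1 \<inter> A n)))}"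
      show "\<omega> \<in> N"
      proof (rule ccontr)
        assume "\<omega> \<notin> N"
        then have "\<pi>' \<omega> = \<pi> \<omega> \<inter> F1" using eqv w by auto
        then have "\<pi> \<omega> \<inter> ((space M - F2) \<inter> (F1 \<inter> A n)) \<subseteq> \<pi>' \<omega> \<inter> A n" by auto
        moreover have "finite (\<pi>' \<omega> \<inter> A n)" using A(3) w by blast
        ultimately have "finite (\<pi> \<omega> \<inter> ((space M - F2) \<inter> (F1 \<inter> A n)))" by (rule finite_subset)
        then show False using w by simp
      qed
    qed
    have "{\<omega>\<in>space P. infinite (\<pi> \<omega> \<inter> ((space M - F2) \<inter> (F1 \<inter> A n)))} \<in> null_sets P"
      using null_sets_subset[OF N meas_infinite[OF cr D] sub] .
    then have "measure P {\<omega>\<in>space P. infinite (\<pi> \<omega> \<inter> ((space M - F2) \<inter> (F1 \<inter> A n)))} = 0"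
      by (rule null_measure0)
    then have m0: "measure P {\<omega>\<in>space P. infinite (\<pi> \<omega> \<inter> (space M - F2) \<inter> (F1 \<inter> A n))} = 0"
      by (simp add: Int_assoc)
    have E: "F1 \<inter> A n \<in> sets M" using F A by auto
    from g2 have "\<forall>A\<in>sets M.
        measure P {\<omega>\<in>space P. (\<pi> \<omega> \<inter> (space M - F2)) \<inter> A \<noteq> {}} = 0 \<or>
        measure P {\<omega>\<in>space P. infinite ((\<pi> \<omega> \<inter> (space M - F2)) \<inter> A)} > 0"
      unfolding good_set_def by (rule conjunct2)
    from bspec[OF this E] have "measure P {\<omega>\<in>space P. \<pi> \<omega> \<inter> (space M - F2) \<inter> (F1 \<inter> A n) \<noteq> {}} = 0 \<or>
        measure P {\<omega>\<in>space P. infinite (\<pi> \<omega> \<inter> (space M - F2) \<inter> (F1 \<inter> A n))} > 0" .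
    with m0 have "measure P {\<omega>\<in>space P. \<pi> \<omega> \<inter> ((space M - F2) \<inter> (F1 \<inter> A n)) \<noteq> {}} = 0"
      by (simp add: Int_assoc)
    then show ?thesis using null_of_measure0[OF P meas_nonempty[OF cr D]] by simp
  qed
  have "{\<omega>\<in>space P. \<pi> \<omega> \<inter> (F1 - F2) \<noteq> {}} \<subseteq> (\<Union>n. {\<omega>\<in>space P. \<pi> \<omega> \<inter> ((space M - F2) \<inter> (F1 \<inter> A n)) \<noteq> {}})"
  proof
    fix \<omega> assume "\<omega> \<in> {\<omega>\<in>space P. \<pi> \<omega> \<inter> (F1 - F2) \<noteq> {}}"
    then obtain x where x: "\<omega> \<in> space P" "x \<in> \<pi> \<omega>" "x \<in> F1" "x \<notin> F2" by auto
    then have "x \<in> space M" using cr_in[OF cr] by auto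
    then obtain n where "x \<in> A n" using A(2) by auto
    then have "x \<in> \<pi> \<omega> \<inter> ((space M - F2) \<inter> (F1 \<inter> A n))" using x \<open>x \<in> space M\<close> by simp
    then show "\<omega> \<in> (\<Union>n. {\<omega>\<in>space P. \<pi> \<omega> \<inter> ((space M - F2) \<inter> (F1 \<inter> A n)) \<noteq> {}})"
      using x(1) by blast
  qed
  moreover have "(\<Union>n. {\<omega>\<in>space P. \<pi> \<omega> \<inter> ((space M - F2) \<inter> (F1 \<inter> A n)) \<noteq> {}}) \<in> null_sets P"
    using null_n by (intro null_sets_UN) auto
  moreover have "{\<omega>\<in>space P. \<pi> \<omega> \<inter> (F1 - F2) \<noteq> {}} \<in> sets P"
    using F by (intro meas_nonempty[OF cr]) auto
  ultimately show ?thesis by (meson null_sets_subset)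
qed

lemma exist_good:
  assumes P: "prob_space P" and cr: "cr_set P M \<pi>" and con: "constructive P M \<pi>"
  shows "\<exists>F\<in>sets M. good_set P M \<pi> F"
proof -
  from con obtain \<pi>s :: "nat \<Rightarrow> _" where fin: "\<forall>k. finite_cr_set P M (\<pi>s k)"
      and eq: "\<forall>\<omega>\<in>space P. \<pi> \<omega> = (\<Union>k. \<pi>s k \<omega>)"
    unfolding constructive_def by (elim exE conjE)
  have crk: "cr_set P M (\<pi>s k)" for k
    using spec[OF fin, of k] unfolding finite_cr_set_def by (rule conjunct1)
  have fink: "finite (\<pi>s k \<omega>)" if "\<omega> \<in> space P" for k \<omega>
    using spec[OF fin, of k] that unfolding finite_cr_set_def by simp
  define t where "t k B \<omega> = ennreal ((1/2)^k * (real (card (B \<inter> \<pi>s k \<omega>)) / (1 + real (card (\<pi>s k \<omega>)))))"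
    for k B \<omega>
  define nu where "nu B = (\<Sum>k. \<integral>\<^sup>+\<omega>. t k B \<omega> \<partial>P)" for B
  have tmeas: "t k B \<in> borel_measurable P" if B: "B \<in> sets M" for k B
  proof -
    let ?g = "\<lambda>(a::enat,b::enat). ennreal ((1/2)^k * (real (the_enat a) / (1 + real (the_enat b))))"
    have m: "(\<lambda>\<omega>. ?g (Ncount B (\<pi>s k \<omega>), Ncount (space M) (\<pi>s k \<omega>))) \<in> borel_measurable P"
      by (rule measurable_compose[OF L2[OF crk B sets.top]]) (simp add: measurable_count_space_eq1)
    have eqf: "?g (Ncount B (\<pi>s k \<omega>), Ncount (space M) (\<pi>s k \<omega>)) = t k B \<omega>" if w: "\<omega> \<in> space P" for \<omega>
    proof -
      have "space M \<inter> \<pi>s k \<omega> = \<pi>s k \<omega>" using cr_in[OF crk w] by blast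
      then show ?thesis using fink[OF w] by (simp add: Ncount_fin t_def)
    qed
    have "(\<lambda>\<omega>. ?g (Ncount B (\<pi>s k \<omega>), Ncount (space M) (\<pi>s k \<omega>))) \<in> borel_measurable P
        \<longleftrightarrow> t k B \<in> borel_measurable P"
      by (rule measurable_cong) (rule eqf)
    then show ?thesis using m by blast
  qed
  have t_add: "t k (B \<union> C) \<omega> = t k B \<omega> + t k C \<omega>" if "B \<inter> C = {}" "\<omega> \<in> space P" for k B C \<omega>
  proof -
    have "(B \<union> C) \<inter> \<pi>s k \<omega> = (B \<inter> \<pi>s k \<omega>) \<union> (C \<inter> \<pi>s k \<omega>)" by blast
    moreover have "(B \<inter> \<pi>s k \<omega>) \<inter> (C \<inter> \<pi>s k \<omega>) = {}" using that by blast
    ultimately have "card ((B \<union> C) \<inter> \<pi>s k \<omega>) = card (B \<inter> \<pi>s k \<omega>) + card (C \<inter> \<pi>s k \<omega>)"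
      using fink[OF that(2)] by (simp add: card_Un_disjoint)
    then show ?thesis
      unfolding t_def by (simp add: ennreal_plus[symmetric] add_divide_distrib distrib_left del: ennreal_plus)
  qed
  have t_mono: "t k B \<omega> \<le> t k C \<omega>" if "B \<subseteq> C" "\<omega> \<in> space P" for k B C \<omega>
  proof -
    have "card (B \<inter> \<pi>s k \<omega>) \<le> card (C \<inter> \<pi>s k \<omega>)"
      using fink[OF that(2)] that(1) by (intro card_mono) auto
    then show ?thesis unfolding t_def
      by (intro ennreal_leI mult_left_mono divide_right_mono) auto
  qed
  have t_le: "t k B \<omega> \<le> ennreal ((1/2)^k)" if "\<omega> \<in> space P" for k B \<omega>
  proof -
    have "card (B \<inter> \<pi>s k \<omega>) \<le> card (\<pi>s k \<omega>)"
      using fink[OF that] by (intro card_mono) auto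
    then have "real (card (B \<inter> \<pi>s k \<omega>)) / (1 + real (card (\<pi>s k \<omega>))) \<le> 1"
      by (simp add: divide_le_eq_1)
    then have "(1/2)^k * (real (card (B \<inter> \<pi>s k \<omega>)) / (1 + real (card (\<pi>s k \<omega>)))) \<le> (1/2)^k"
      by (intro mult_left_le) auto
    then show ?thesis unfolding t_def by (rule ennreal_leI)
  qed
  have nu_add: "nu (B \<union> C) = nu B + nu C" if "B \<in> sets M" "C \<in> sets M" "B \<inter> C = {}" for B C
  proof -
    have "(\<integral>\<^sup>+\<omega>. t k (B \<union> C) \<omega> \<partial>P) = (\<integral>\<^sup>+\<omega>. t k B \<omega> + t k C \<omega> \<partial>P)" for k
      by (rule nn_integral_cong) (simp add: t_add that)
    also have "\<dots> k = (\<integral>\<^sup>+\<omega>. t k B \<omega> \<partial>P) + (\<integral>\<^sup>+\<omega>. t k C \<omega> \<partial>P)" for k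
      by (rule nn_integral_add) (simp_all add: tmeas that)
    finally show ?thesis unfolding nu_def
      by (simp add: suminf_add[symmetric] summableI)
  qed
  have nu_mono: "nu B \<le> nu C" if "B \<subseteq> C" for B C
    unfolding nu_def
    by (intro suminf_le summableI nn_integral_mono t_mono that)
  have nu_fin: "nu B < top" for B
  proof -
    have "(\<integral>\<^sup>+\<omega>. t k B \<omega> \<partial>P) \<le> (\<integral>\<^sup>+\<omega>. ennreal ((1/2)^k) \<partial>P)" for k
      by (intro nn_integral_mono t_le)
    also have "\<dots> k = ennreal ((1/2)^k)" for k
      using P by (simp add: prob_space.emeasure_space_1)
    finally have "nu B \<le> (\<Sum>k. ennreal ((1/2)^k))" unfolding nu_def
      by (intro suminf_le summableI)
    also have "\<dots> = ennreal (\<Sum>k. (1/2)^k)"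
      by (rule suminf_ennreal2) auto
    also have "\<dots> < top" by simp
    finally show ?thesis .
  qed
  have nu_zero: "{\<omega>\<in>space P. \<pi> \<omega> \<inter> B \<noteq> {}} \<in> null_sets P" if B: "B \<in> sets M" "nu B = 0" for B
  proof -
    have "(\<integral>\<^sup>+\<omega>. t k B \<omega> \<partial>P) = 0" for k
    proof -
      have "(\<Sum>j\<in>{k}. \<integral>\<^sup>+\<omega>. t j B \<omega> \<partial>P) \<le> nu B"
        unfolding nu_def by (intro sum_le_suminf summableI) auto
      then show ?thesis using B by simp
    qed
    then have "AE \<omega> in P. t k B \<omega> = 0" for k
      using nn_integral_0_iff_AE[OF tmeas[OF B(1)]] by blast
    then have "AE \<omega> in P. \<forall>k. t k B \<omega> = 0" by (simp add: AE_all_countable)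
    note aek = this
    have pw: "\<not> (\<pi> \<omega> \<inter> B \<noteq> {})" if w: "\<omega> \<in> space P" and z: "\<forall>k. t k B \<omega> = 0" for \<omega>
    proof -
      have "B \<inter> \<pi>s k \<omega> = {}" for k
      proof -
        have "(1/2::real)^k * (real (card (B \<inter> \<pi>s k \<omega>)) / (1 + real (card (\<pi>s k \<omega>)))) \<le> 0"
          using z unfolding t_def by (simp add: ennreal_eq_0_iff del: divide_le_0_iff)
        moreover have h: "\<not> (1/2::real)^k \<le> 0" by (simp add: not_le)
        ultimately have "real (card (B \<inter> \<pi>s k \<omega>)) \<le> 0"
          by (simp add: mult_le_0_iff divide_le_0_iff add_pos_nonneg)
        then show ?thesis using fink[OF w] by simp
      qed
      then show "\<not> (\<pi> \<omega> \<inter> B \<noteq> {})" using eq w by auto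
    qed
    have sp: "AE \<omega> in P. \<omega> \<in> space P" by (rule AE_space)
    from sp aek have ae: "AE \<omega> in P. \<not> (\<pi> \<omega> \<inter> B \<noteq> {})"
      by eventually_elim (rule pw)
    have ms: "{\<omega>\<in>space P. \<pi> \<omega> \<inter> B \<noteq> {}} \<in> sets P" by (rule meas_nonempty[OF cr B(1)])
    have "emeasure P {\<omega>\<in>space P. \<pi> \<omega> \<inter> B \<noteq> {}} = 0"
      using AE_iff_measurable[OF ms, of "\<lambda>\<omega>. \<not> (\<pi> \<omega> \<inter> B \<noteq> {})"] ae by simp
    then show ?thesis using ms by blast
  qed
  define G where "G = {A \<in> sets M. {\<omega>\<in>space P. infinite (\<pi> \<omega> \<inter> A)} \<in> null_sets P}"
  define K where "K = {X. \<exists>A. (\<forall>n::nat. A n \<in> G) \<and> X = (\<Union>n. A n)}"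
  have G_sets: "A \<in> sets M" if "A \<in> G" for A using that unfolding G_def by simp
  have K_sets: "X \<in> sets M" if "X \<in> K" for X
  proof -
    from that have "\<exists>A. (\<forall>n::nat. A n \<in> G) \<and> X = (\<Union>n. A n)" unfolding K_def by simp
    then obtain A where A: "(\<forall>n::nat. A n \<in> G) \<and> X = (\<Union>n. A n)" by (rule exE)
    then show ?thesis using G_sets by auto
  qed
  have K_ne: "{} \<in> K"
  proof -
    have "{} \<in> G" unfolding G_def by simp
    then show ?thesis unfolding K_def by (intro CollectI exI[of _ "\<lambda>n::nat. {}"]) simp
  qed
  have K_UN: "(\<Union>i. X i) \<in> K" if X: "\<forall>i::nat. X i \<in> K" for X
  proof -
    from X have "\<forall>i. \<exists>A. (\<forall>n::nat. A n \<in> G) \<and> X i = (\<Union>n. A n)" unfolding K_def by simp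
    then have "\<exists>AA. \<forall>i. (\<forall>n::nat. AA i n \<in> G) \<and> X i = (\<Union>n. AA i n)" by (rule choice)
    then obtain AA where AA: "\<forall>i. (\<forall>n::nat. AA i n \<in> G) \<and> X i = (\<Union>n. AA i n)" by (rule exE)
    define B where "B j = AA (fst (prod_decode j)) (snd (prod_decode j))" for j
    have "(\<Union>i. X i) = (\<Union>j. B j)"
    proof
      show "(\<Union>i. X i) \<subseteq> (\<Union>j. B j)"
      proof
        fix x assume "x \<in> (\<Union>i. X i)"
        then obtain i where "x \<in> X i" by blast
        then obtain n where "x \<in> AA i n" using AA by blast
        then have "x \<in> B (prod_encode (i, n))" unfolding B_def by simp
        then show "x \<in> (\<Union>j. B j)" by blast
      qed
      show "(\<Union>j. B j) \<subseteq> (\<Union>i. X i)"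
      proof
        fix x assume "x \<in> (\<Union>j. B j)"
        then obtain j where "x \<in> B j" by blast
        then have "x \<in> X (fst (prod_decode j))" using AA unfolding B_def by blast
        then show "x \<in> (\<Union>i. X i)" by blast
      qed
    qed
    note eqB = this
    have BG: "\<forall>j. B j \<in> G" using AA unfolding B_def by simp
    show ?thesis unfolding K_def by (intro CollectI exI[of _ B] conjI BG eqB)
  qed
  have K_Un: "X \<union> Y \<in> K" if "X \<in> K" "Y \<in> G" for X Y
  proof -
    have YK: "Y \<in> K" unfolding K_def using that(2) by (intro CollectI exI[of _ "\<lambda>n::nat. Y"]) simp
    have "(\<Union>i::nat. if i = 0 then X else Y) \<in> K" using that(1) YK by (intro K_UN) simp
    moreover have "(\<Union>i::nat. if i = 0 then X else Y) = X \<union> Y"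
    proof
      show "(\<Union>i::nat. if i = 0 then X else Y) \<subseteq> X \<union> Y" by (auto split: if_splits)
      show "X \<union> Y \<subseteq> (\<Union>i::nat. if i = 0 then X else Y)"
      proof
        fix x assume "x \<in> X \<union> Y"
        then show "x \<in> (\<Union>i::nat. if i = 0 then X else Y)"
        proof
          assume "x \<in> X" then show ?thesis by (intro UN_I[of 0]) auto
        next
          assume "x \<in> Y" then show ?thesis by (intro UN_I[of 1]) auto
        qed
      qed
    qed
    ultimately show ?thesis by simp
  qed
  have "nu ` K \<noteq> {}" using K_ne by blast
  from ennreal_Sup_countable_SUP[OF this] obtain f :: "nat \<Rightarrow> ennreal" where
    f: "range f \<subseteq> nu ` K" "Sup (nu ` K) = (SUP i. f i)" by blast
  have "\<forall>i. \<exists>X. X \<in> K \<and> f i = nu X" using f(1) by blast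
  then have "\<exists>XX. \<forall>i. XX i \<in> K \<and> f i = nu (XX i)" by (rule choice)
  then obtain XX where XX: "\<forall>i. XX i \<in> K \<and> f i = nu (XX i)" by (rule exE)
  define F where "F = (\<Union>i. XX i)"
  have FK: "F \<in> K" unfolding F_def using XX K_UN[of XX] by simp
  have Fmax: "nu Y \<le> nu F" if "Y \<in> K" for Y
  proof -
    have "nu Y \<le> Sup (nu ` K)" using that by (intro Sup_upper) simp
    also have "\<dots> = (SUP i. f i)" by (rule f(2))
    also have "\<dots> \<le> nu F"
    proof (rule SUP_least)
      fix i
      have "XX i \<subseteq> F" unfolding F_def by blast
      then show "f i \<le> nu F" using XX nu_mono by simp
    qed
    finally show ?thesis .
  qed
  have FM: "F \<in> sets M" using FK K_sets by simp
  from FK have "\<exists>A. (\<forall>n::nat. A n \<in> G) \<and> F = (\<Union>n. A n)" unfolding K_def by simp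
  then obtain A where A0: "(\<forall>n::nat. A n \<in> G) \<and> F = (\<Union>n. A n)" by (rule exE)
  have A: "\<forall>n::nat. A n \<in> G" "F = (\<Union>n. A n)" using A0 by (rule conjunct1, rule conjunct2)
  define N where "N = (\<Union>n. {\<omega>\<in>space P. infinite (\<pi> \<omega> \<inter> A n)})"
  have NN: "N \<in> null_sets P" unfolding N_def using A(1) unfolding G_def by (intro null_sets_UN) simp
  define \<pi>' where "\<pi>' \<omega> = (if \<omega> \<in> N then {} else \<pi> \<omega> \<inter> F)" for \<omega>
  have cr': "cr_set P M \<pi>'" unfolding \<pi>'_def using NN by (intro cr_If cr_inter cr FM) auto
  have ver: "is_version P M (\<lambda>\<omega>. \<pi> \<omega> \<inter> F) \<pi>'"
    unfolding is_version_def
  proof (intro conjI bexI[of _ N])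
    show "\<forall>\<omega>\<in>space P - N. \<pi>' \<omega> = \<pi> \<omega> \<inter> F" unfolding \<pi>'_def by simp
  qed (use cr' NN in auto)
  have sfin: "sigma_finite_on P M \<pi>'"
    unfolding sigma_finite_on_def
  proof (intro exI[of _ "\<lambda>n. case n of 0 \<Rightarrow> space M - F | Suc m \<Rightarrow> A m"] conjI allI ballI)
    fix n
    show "(case n of 0 \<Rightarrow> space M - F | Suc m \<Rightarrow> A m) \<in> sets M"
      using FM A(1) G_sets by (cases n) auto
  next
    have Asp: "A m \<subseteq> space M" for m :: nat using A(1) G_sets sets.sets_into_space by blast
    show "(\<Union>n. case n of 0 \<Rightarrow> space M - F | Suc m \<Rightarrow> A m) = space M"
    proof
      show "(\<Union>n. case n of 0 \<Rightarrow> space M - F | Suc m \<Rightarrow> A m) \<subseteq> space M"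
      proof (rule UN_least)
        fix n :: nat
        show "(case n of 0 \<Rightarrow> space M - F | Suc m \<Rightarrow> A m) \<subseteq> space M"
          using Asp by (cases n) simp_all
      qed
      show "space M \<subseteq> (\<Union>n. case n of 0 \<Rightarrow> space M - F | Suc m \<Rightarrow> A m)"
      proof
        fix x assume x: "x \<in> space M"
        show "x \<in> (\<Union>n. case n of 0 \<Rightarrow> space M - F | Suc m \<Rightarrow> A m)"
        proof (cases "x \<in> F")
          case True
          then obtain m where "x \<in> A m" using A(2) by blast
          then show ?thesis by (intro UN_I[of "Suc m"]) auto
        next
          case False
          then show ?thesis using x by (intro UN_I[of 0]) auto
        qed
      qed
    qed
  next
    fix \<omega> n assume w: "\<omega> \<in> space P"
    show "finite (\<pi>' \<omega> \<inter> (case n of 0 \<Rightarrow> space M - F | Suc m \<Rightarrow> A m))"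
    proof (cases "\<omega> \<in> N")
      case True then show ?thesis unfolding \<pi>'_def by simp
    next
      case False
      show ?thesis
      proof (cases n)
        case 0
        have "\<pi> \<omega> \<inter> F \<inter> (space M - F) = {}" by blast
        then show ?thesis unfolding \<pi>'_def using False 0 by simp
      next
        case (Suc m)
        have "finite (\<pi> \<omega> \<inter> A m)" using False w unfolding N_def by blast
        then show ?thesis unfolding \<pi>'_def using False Suc by (auto intro: finite_subset)
      qed
    qed
  qed
  have part2: "measure P {\<omega>\<in>space P. (\<pi> \<omega> \<inter> (space M - F)) \<inter> Aset \<noteq> {}} = 0 \<or>
        measure P {\<omega>\<in>space P. infinite ((\<pi> \<omega> \<inter> (space M - F)) \<inter> Aset)} > 0"
    if Aset: "Aset \<in> sets M" for Aset
  proof (cases "measure P {\<omega>\<in>space P. infinite ((\<pi> \<omega> \<inter> (space M - F)) \<inter> Aset)} > 0")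
    case True then show ?thesis by simp
  next
    case False
    define D where "D = (space M - F) \<inter> Aset"
    have DM: "D \<in> sets M" unfolding D_def using FM Aset by auto
    have "measure P {\<omega>\<in>space P. infinite (\<pi> \<omega> \<inter> D)} = 0"
      using False measure_nonneg[of P] unfolding D_def by (simp add: Int_assoc not_less order.antisym)
    then have "{\<omega>\<in>space P. infinite (\<pi> \<omega> \<inter> D)} \<in> null_sets P"
      by (intro null_of_measure0[OF P meas_infinite[OF cr DM]])
    then have DG: "D \<in> G" unfolding G_def using DM by simp
    have "nu F + nu D = nu (F \<union> D)"
      using FM DM by (intro nu_add[symmetric]) (auto simp: D_def)
    also have "\<dots> \<le> nu F" by (intro Fmax K_Un FK DG)
    finally have "nu F + nu D \<le> nu F + 0" by simp
    then have "nu D = 0" using nu_fin[of F] by (auto simp: ennreal_add_left_cancel_le)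
    then have "{\<omega>\<in>space P. \<pi> \<omega> \<inter> D \<noteq> {}} \<in> null_sets P" by (intro nu_zero DM)
    then have "measure P {\<omega>\<in>space P. \<pi> \<omega> \<inter> D \<noteq> {}} = 0" by (rule null_measure0)
    then show ?thesis unfolding D_def by (simp add: Int_assoc)
  qed
  have "good_set P M \<pi> F"
    unfolding good_set_def by (intro conjI exI[of _ \<pi>'] ballI part2 ver sfin)
  then show ?thesis by (rule bexI[OF _ FM])
qed

theorem theorem1p10:
  fixes M :: "'a measure" and P :: "'b measure" and \<pi> :: "'b \<Rightarrow> 'a set"
  assumes "prob_space P"
    and "{(x, x) | x. x \<in> space M} \<in> sets (M \<Otimes>\<^sub>M M)"
    and "cr_set P M \<pi>"
    and "constructive P M \<pi>"
  shows "(\<exists>F\<in>sets M. good_set P M \<pi> F) \<and>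
         (\<forall>F1\<in>sets M. \<forall>F2\<in>sets M. good_set P M \<pi> F1 \<and> good_set P M \<pi> F2 \<longrightarrow>
            measure P {\<omega>\<in>space P. \<pi> \<omega> \<inter> ((F1 - F2) \<union> (F2 - F1)) \<noteq> {}} = 0)"
proof (intro conjI ballI impI)
  show "\<exists>F\<in>sets M. good_set P M \<pi> F" using exist_good[OF assms(1,3,4)] .
next
  fix F1 F2 assume F: "F1 \<in> sets M" "F2 \<in> sets M" and g: "good_set P M \<pi> F1 \<and> good_set P M \<pi> F2"
  have n1: "{\<omega>\<in>space P. \<pi> \<omega> \<inter> (F1 - F2) \<noteq> {}} \<in> null_sets P"
    using g by (intro uniq_half[OF assms(1,3) F]) auto
  have n2: "{\<omega>\<in>space P. \<pi> \<omega> \<inter> (F2 - F1) \<noteq> {}} \<in> null_sets P"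
    using g by (intro uniq_half[OF assms(1,3) F(2) F(1)]) auto
  have ms: "{\<omega>\<in>space P. \<pi> \<omega> \<inter> ((F1 - F2) \<union> (F2 - F1)) \<noteq> {}} \<in> sets P"
    using F by (intro meas_nonempty[OF assms(3)]) auto
  have "{\<omega>\<in>space P. \<pi> \<omega> \<inter> ((F1 - F2) \<union> (F2 - F1)) \<noteq> {}}
     \<subseteq> {\<omega>\<in>space P. \<pi> \<omega> \<inter> (F1 - F2) \<noteq> {}} \<union> {\<omega>\<in>space P. \<pi> \<omega> \<inter> (F2 - F1) \<noteq> {}}"
    by blast
  then have "{\<omega>\<in>space P. \<pi> \<omega> \<inter> ((F1 - F2) \<union> (F2 - F1)) \<noteq> {}} \<in> null_sets P"
    using n1 n2 ms by (meson null_sets.Un null_sets_subset)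
  then show "measure P {\<omega>\<in>space P. \<pi> \<omega> \<inter> ((F1 - F2) \<union> (F2 - F1)) \<noteq> {}} = 0"
    by (rule null_measure0)
qed

end
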